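(* Let $V$ be an $n$-dimensional real inner product space, $r\ge0$, and $\omega$ a $k$-form on $V$ with $|\omega|^{\natural_r}<\infty$. Then $|\star\omega|^{\natural_r}=|\omega|^{\natural_r}$.
   Context: For a simple $k$-vector $\alpha=w_1\wedge\dots\wedge w_k$, $M(\alpha)=\sqrt{\det\langle w_i,w_j\rangle}$. For a simple $k$-vector $\alpha$, $\perp\alpha$ is the simple $(n-k)$-vector with $M(\perp\alpha)=M(\alpha)$ whose $(n-k)$-dimensional subspace is the orthogonal complement of the span of $\alpha$, oriented so that $\alpha\wedge\perp\alpha$ is a positive multiple of $e_1\wedge\dots\wedge e_n$ for a fixed oriented orthonormal basis; $\perp$ is extended linearly. A monopolar $k$-chain is a finite formal sum $\sum_i(p_i;\alpha_i)$, linear in the second slot at each point; $\perp(p;\alpha)=(p;\perp\alpha)$. $T_u(p;\alpha)=(p+u;\alpha)$, $\Delta_u=T_u-\mathrm{id}$, $\Delta^j_U=\Delta_{u_1}\circ\dots\circ\Delta_{u_j}$, $\|\Delta^j_U(p;\alpha)\|_j=|u_1|\cdots|u_j|M(\alpha)$. A $k$-form is a linear functional $\omega$ on monopolar $k$-chains; $\|\omega\|_0=\sup\{|\omega(p;\alpha)|:\alpha$ simple, $M(\alpha)=1\}$, $\|\omega\|_j=\sup\{|\omega(\Delta^j_U(p;\alpha))|:\|\Delta^j_U(p;\alpha)\|_j=1\}$, $|\omega|^{\natural_r}=\max_{0\le j\le r}\|\omega\|_j$. The Hodge star of a $k$-form is the $(n-k)$-form $\star\omega(p;\alpha)=\omega(p;\perp\alpha)$.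 *)

theory Defs
  imports "HOL-Analysis.Analysis"
begin

definition natdet :: "nat \<Rightarrow> (nat \<Rightarrow> nat \<Rightarrow> real) \<Rightarrow> real" where
  "natdet m A = (\<Sum>p | p permutes {..<m}. of_int (sign p) * (\<Prod>i<m. A i (p i)))"

text \<open>A tuple w 0, ..., w (m-1) of vectors represents the simple m-vector w0 wedge ... wedge w(m-1).
  A general simple m-vector is c times such a wedge (needed for m = 0, where simple 0-vectors are scalars).\<close>
definition gram :: "nat \<Rightarrow> (nat \<Rightarrow> 'a::real_inner) \<Rightarrow> real" where
  "gram m w = natdet m (\<lambda>i j. w i \<bullet> w j)"

definition mass :: "nat \<Rightarrow> (nat \<Rightarrow> 'a::real_inner) \<Rightarrow> real" where
  "mass m w = sqrt (gram m w)"

definition orthonormal_frame :: "nat \<Rightarrow> (nat \<Rightarrow> 'a::real_inner) \<Rightarrow> bool" where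
  "orthonormal_frame m e \<longleftrightarrow> (\<forall>i<m. \<forall>j<m. e i \<bullet> e j = (if i = j then 1 else 0))"

definition tuple_append :: "nat \<Rightarrow> (nat \<Rightarrow> 'a) \<Rightarrow> (nat \<Rightarrow> 'a) \<Rightarrow> nat \<Rightarrow> 'a" where
  "tuple_append m v y = (\<lambda>i. if i < m then v i else y (i - m))"

text \<open>Coefficient of v0 wedge ... wedge v(n-1) with respect to e0 wedge ... wedge e(n-1),
  for the fixed oriented orthonormal basis e.\<close>
definition orient :: "(nat \<Rightarrow> 'a::euclidean_space) \<Rightarrow> (nat \<Rightarrow> 'a) \<Rightarrow> real" where
  "orient e v = natdet DIM('a) (\<lambda>i j. v i \<bullet> e j)"

text \<open>perp of the simple m-vector v0 wedge ... wedge v(m-1): the simple (n-m)-vector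
  s * y0 wedge ... wedge y(n-m-1), where y is an orthonormal frame of the orthogonal complement,
  abs s = M(v), and v wedge perp v is a positive multiple of e0 wedge ... wedge e(n-1).
  perp 0 = 0.\<close>
definition perp :: "(nat \<Rightarrow> 'a::euclidean_space) \<Rightarrow> nat \<Rightarrow> (nat \<Rightarrow> 'a) \<Rightarrow> real \<times> (nat \<Rightarrow> 'a)" where
  "perp e m v = (if gram m v = 0 then (0, (\<lambda>_. 0)) else
     (SOME (s, y). orthonormal_frame (DIM('a) - m) y \<and> (\<forall>j. DIM('a) - m \<le> j \<longrightarrow> y j = 0) \<and>
        (\<forall>i<m. \<forall>j<DIM('a) - m. v i \<bullet> y j = 0) \<and> \<bar>s\<bar> = mass m v \<and>
        s * orient e (tuple_append m v y) > 0))"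

text \<open>Linear functionals on the k-th exterior power correspond to alternating k-linear maps.\<close>
definition is_kcovector :: "nat \<Rightarrow> ((nat \<Rightarrow> 'a::real_vector) \<Rightarrow> real) \<Rightarrow> bool" where
  "is_kcovector k f \<longleftrightarrow>
     (\<forall>w w'. (\<forall>i<k. w i = w' i) \<longrightarrow> f w = f w') \<and>
     (\<forall>w. \<forall>i<k. linear (\<lambda>x. f (w(i := x)))) \<and>
     (\<forall>w i j. i < k \<and> j < k \<and> i \<noteq> j \<and> w i = w j \<longrightarrow> f w = 0)"

text \<open>A k-form (linear functional on monopolar k-chains): omega p w = omega(p; w0 wedge ... wedge w(k-1)).\<close>
definition is_kform :: "nat \<Rightarrow> ('a::real_vector \<Rightarrow> (nat \<Rightarrow> 'a) \<Rightarrow> real) \<Rightarrow> bool" where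
  "is_kform k \<omega> \<longleftrightarrow> (\<forall>p. is_kcovector k (\<omega> p))"

definition hodge :: "(nat \<Rightarrow> 'a::euclidean_space) \<Rightarrow> nat \<Rightarrow> ('a \<Rightarrow> (nat \<Rightarrow> 'a) \<Rightarrow> real)
    \<Rightarrow> ('a \<Rightarrow> (nat \<Rightarrow> 'a) \<Rightarrow> real)" where
  "hodge e k \<omega> = (\<lambda>p v. case perp e (DIM('a) - k) v of (s, y) \<Rightarrow> s * \<omega> p y)"

text \<open>omega(Delta^j_U (p; c * w)), using Delta^j_U = sum over S of (-1)^(j-|S|) T_(sum_S u).\<close>
definition diff_eval :: "('a::real_vector \<Rightarrow> (nat \<Rightarrow> 'a) \<Rightarrow> real) \<Rightarrow> nat \<Rightarrow> (nat \<Rightarrow> 'a) \<Rightarrow> 'a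
    \<Rightarrow> real \<Rightarrow> (nat \<Rightarrow> 'a) \<Rightarrow> real" where
  "diff_eval \<omega> j u p c w = c * (\<Sum>S\<in>Pow {..<j}. (-1) ^ (j - card S) * \<omega> (p + (\<Sum>i\<in>S. u i)) w)"

definition form_norm0 :: "nat \<Rightarrow> ('a::real_inner \<Rightarrow> (nat \<Rightarrow> 'a) \<Rightarrow> real) \<Rightarrow> ereal" where
  "form_norm0 k \<omega> = (SUP (p, c, w) \<in> {(p, c, w). \<bar>c\<bar> * mass k w = 1}. ereal \<bar>c * \<omega> p w\<bar>)"

definition form_normj :: "nat \<Rightarrow> nat \<Rightarrow> ('a::real_inner \<Rightarrow> (nat \<Rightarrow> 'a) \<Rightarrow> real) \<Rightarrow> ereal" where
  "form_normj k j \<omega> = (SUP (p, c, w, u) \<in> {(p, c, w, u). (\<Prod>i<j. norm (u i)) * (\<bar>c\<bar> * mass k w) = 1}.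
       ereal \<bar>diff_eval \<omega> j u p c w\<bar>)"

definition nat_norm :: "nat \<Rightarrow> nat \<Rightarrow> ('a::real_inner \<Rightarrow> (nat \<Rightarrow> 'a) \<Rightarrow> real) \<Rightarrow> ereal" where
  "nat_norm k r \<omega> = Max ((\<lambda>j. if j = 0 then form_norm0 k \<omega> else form_normj k j \<omega>) ` {..r})"

end

theory Submission imports Defs "Jordan_Normal_Form.Determinant" begin

lemma natdet_det: "natdet m A = det (mat m m (\<lambda>(i,j). A i j))"
  unfolding natdet_def det_def
  by (simp add: atLeast0LessThan)

lemma natdet_id: "natdet m (\<lambda>i j. if i = j then 1 else 0) = 1"
proof -
  have "mat m m (\<lambda>(i,j). if i = j then (1::real) else 0) = 1\<^sub>m m"
    by (rule eq_matI) auto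
  then show ?thesis by (simp add: natdet_det)
qed

lemma gram_on: "orthonormal_frame m y \<Longrightarrow> gram m y = 1"
proof -
  assume "orthonormal_frame m y"
  then have "natdet m (\<lambda>i j. y i \<bullet> y j) = natdet m (\<lambda>i j. if i = j then 1 else 0)"
    unfolding natdet_def orthonormal_frame_def
    apply (intro sum.cong refl arg_cong[where f="\<lambda>x. _ * x"] prod.cong)
    apply (metis lessThan_iff permutes_in_image mem_Collect_eq)
    done
  then show ?thesis by (simp add: gram_def natdet_id)
qed

lemma gram_kernel:
  fixes v :: "nat \<Rightarrow> 'a::real_inner"
  assumes g: "gram m v \<noteq> 0" and s: "(\<Sum>i<m. x i *\<^sub>R v i) = 0" and i: "i < m"
  shows "x i = 0"
proof (rule ccontr)
  assume xi: "x i \<noteq> 0"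
  let ?G = "mat m m (\<lambda>(i,j). v i \<bullet> v j)"
  let ?x = "vec m x"
  have G: "?G \<in> carrier_mat m m" by simp
  have "?G *\<^sub>v ?x = 0\<^sub>v m"
  proof (rule eq_vecI)
    fix l assume l: "l < dim_vec (0\<^sub>v m :: real vec)"
    then have "(?G *\<^sub>v ?x) $ l = (\<Sum>j<m. (v l \<bullet> v j) * x j)"
      by (simp add: mult_mat_vec_def scalar_prod_def atLeast0LessThan)
    also have "\<dots> = v l \<bullet> (\<Sum>j<m. x j *\<^sub>R v j)"
      by (simp add: inner_sum_right mult.commute)
    also have "\<dots> = 0" using s by simp
    finally show "(?G *\<^sub>v ?x) $ l = 0\<^sub>v m $ l" using l by simp
  qed simp
  moreover have "?x \<noteq> 0\<^sub>v m"
  proof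
    assume "?x = 0\<^sub>v m"
    then have "?x $ i = 0\<^sub>v m $ i" by simp
    with i xi show False by simp
  qed
  ultimately have "det ?G = 0"
    using det_0_iff_vec_prod_zero[OF G] vec_carrier by blast
  with g show False by (simp add: gram_def natdet_det)
qed


lemma on_frame_span:
  fixes f :: "nat \<Rightarrow> 'a::euclidean_space"
  assumes on: "orthonormal_frame DIM('a) f" and z: "\<forall>i<DIM('a). z \<bullet> f i = 0"
  shows "z = 0"
proof -
  let ?n = "DIM('a)"
  let ?F = "f ` {..<?n}"
  have inj: "inj_on f {..<?n}"
  proof (rule inj_onI)
    fix i j assume i: "i \<in> {..<?n}" and j: "j \<in> {..<?n}" and e: "f i = f j"
    show "i = j"
    proof (rule ccontr)
      assume "i \<noteq> j"
      then have "f i \<bullet> f j = 0" using on i j by (simp add: orthonormal_frame_def)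
      moreover have "f i \<bullet> f i = 1" using on i by (simp add: orthonormal_frame_def)
      ultimately show False using e by simp
    qed
  qed
  have card: "card ?F = ?n" using inj by (simp add: card_image)
  have po: "pairwise real_inner_class.orthogonal ?F"
    unfolding pairwise_def real_inner_class.orthogonal_def
    using on by (auto simp: orthonormal_frame_def)
  have n0: "0 \<notin> ?F"
  proof
    assume "0 \<in> ?F"
    then obtain i where i: "i < ?n" and fi: "f i = 0" by auto
    have "f i \<bullet> f i = 1" using on i by (simp add: orthonormal_frame_def)
    with fi show False by simp
  qed
  have ind: "independent ?F" by (rule pairwise_orthogonal_independent[OF po n0])
  have "UNIV \<subseteq> span ?F"
    by (rule card_ge_dim_independent) (use ind card in auto)
  then have "z \<in> span ?F" by auto
  then have "real_inner_class.orthogonal z z"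
    by (rule orthogonal_to_span) (use z in \<open>auto simp: real_inner_class.orthogonal_def\<close>)
  then show ?thesis by (simp add: real_inner_class.orthogonal_def)
qed

lemma gram_coords:
  fixes y w :: "nat \<Rightarrow> 'a::real_inner"
  assumes on: "orthonormal_frame k y" and w: "\<forall>i<k. w i = (\<Sum>j<k. A i j *\<^sub>R y j)"
  shows "gram k w = (natdet k A)^2"
proof -
  have ip: "w i \<bullet> w l = (\<Sum>t<k. A i t * A l t)" if i: "i < k" and l: "l < k" for i l
  proof -
    have "w i \<bullet> w l = (\<Sum>j'<k. \<Sum>j<k. A i j * A l j' * (y j \<bullet> y j'))"
      using w i l by (simp add: inner_sum_left inner_sum_right sum_distrib_left mult.assoc mult.left_commute)
    also have "\<dots> = (\<Sum>j'<k. \<Sum>j<k. if j = j' then A i j * A l j' else 0)"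
      using on by (intro sum.cong refl) (auto simp: orthonormal_frame_def)
    also have "\<dots> = (\<Sum>t<k. A i t * A l t)" by simp
    finally show ?thesis .
  qed
  let ?M = "mat k k (\<lambda>(i,j). A i j)"
  have M: "?M \<in> carrier_mat k k" by simp
  have "mat k k (\<lambda>(i,j). w i \<bullet> w j) = ?M * transpose_mat ?M"
    by (rule eq_matI) (auto simp: ip scalar_prod_def atLeast0LessThan)
  then have "gram k w = det (?M * transpose_mat ?M)"
    by (simp add: gram_def natdet_det)
  also have "\<dots> = det ?M * det (transpose_mat ?M)"
    by (rule det_mult[OF M]) simp
  also have "\<dots> = (natdet k A)^2"
    by (simp add: det_transpose[OF M] natdet_det power2_eq_square)
  finally show ?thesis .
qed

lemma orient_nonzero:
  fixes e v y :: "nat \<Rightarrow> 'a::euclidean_space"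
  assumes e: "orthonormal_frame DIM('a) e" and m: "m \<le> DIM('a)"
    and g: "gram m v \<noteq> 0" and y: "orthonormal_frame (DIM('a) - m) y"
    and vy: "\<forall>i<m. \<forall>j<DIM('a) - m. v i \<bullet> y j = 0"
  shows "orient e (tuple_append m v y) \<noteq> 0"
proof
  let ?n = "DIM('a)"
  let ?u = "tuple_append m v y"
  let ?M = "mat ?n ?n (\<lambda>(i,j). ?u i \<bullet> e j)"
  assume "orient e ?u = 0"
  then have "det ?M = 0" by (simp add: orient_def natdet_det)
  then have "det (transpose_mat ?M) = 0" using det_transpose[of ?M ?n] by simp
  then obtain x where xc: "x \<in> carrier_vec ?n" and x0: "x \<noteq> 0\<^sub>v ?n"
    and xk: "transpose_mat ?M *\<^sub>v x = 0\<^sub>v ?n"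
    using det_0_iff_vec_prod_zero[of "transpose_mat ?M" ?n] by auto
  define z where "z = (\<Sum>i<?n. (x $ i) *\<^sub>R ?u i)"
  have "z \<bullet> e j = 0" if j: "j < ?n" for j
  proof -
    have "(transpose_mat ?M *\<^sub>v x) $ j = 0" using xk j by simp
    moreover have "(transpose_mat ?M *\<^sub>v x) $ j = (\<Sum>i<?n. (?u i \<bullet> e j) * x $ i)"
      using j xc by (simp add: mult_mat_vec_def scalar_prod_def atLeast0LessThan)
    ultimately show ?thesis
      by (simp add: z_def inner_sum_left mult.commute)
  qed
  then have z0: "z = 0" using on_frame_span[OF e] by blast
  have uy: "?u i \<bullet> y l = (if i = m + l then 1 else 0)" if i: "i < ?n" and l: "l < ?n - m" for i l
    using vy y i l by (auto simp: tuple_append_def orthonormal_frame_def inner_commute)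
  have xhi: "x $ (m + l) = 0" if l: "l < ?n - m" for l
  proof -
    have "z \<bullet> y l = (\<Sum>i<?n. x $ i * (?u i \<bullet> y l))"
      by (simp add: z_def inner_sum_left)
    also have "\<dots> = (\<Sum>i<?n. if i = m + l then x $ i else 0)"
      using uy l by (intro sum.cong refl) auto
    also have "\<dots> = x $ (m + l)" using l by simp
    finally show ?thesis using z0 by simp
  qed
  have xhi': "x $ i = 0" if "m \<le> i" "i < ?n" for i
    using xhi[of "i - m"] that by simp
  have "(\<Sum>i<m. (x $ i) *\<^sub>R v i) = (\<Sum>i<?n. (x $ i) *\<^sub>R ?u i)"
  proof (rule sum.mono_neutral_cong_left)
    show "\<forall>i\<in>{..<?n} - {..<m}. x $ i *\<^sub>R ?u i = 0" using xhi' by auto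
  qed (use m in \<open>auto simp: tuple_append_def\<close>)
  then have "(\<Sum>i<m. (x $ i) *\<^sub>R v i) = 0" using z0 z_def by simp
  then have xlo: "x $ i = 0" if "i < m" for i
    using gram_kernel[OF g, of "\<lambda>i. x $ i"] that by blast
  have "x = 0\<^sub>v ?n"
  proof (rule eq_vecI)
    fix i assume "i < dim_vec (0\<^sub>v ?n :: real vec)"
    then have i: "i < ?n" by simp
    show "x $ i = 0\<^sub>v ?n $ i"
      using i xlo xhi'[OF _ i] by (cases "i < m") auto
  qed (use xc in simp)
  with x0 show False by simp
qed


lemma gram_inj:
  fixes v :: "nat \<Rightarrow> 'a::real_inner"
  assumes g: "gram m v \<noteq> 0"
  shows "inj_on v {..<m}"
proof (rule inj_onI)
  fix i j assume i: "i \<in> {..<m}" and j: "j \<in> {..<m}" and e: "v i = v j"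
  show "i = j"
  proof (rule ccontr)
    assume ij: "i \<noteq> j"
    define x where "x = (\<lambda>l. (if l = i then 1 else 0) - (if l = j then 1 else (0::real)))"
    have xe: "(\<lambda>l. x l *\<^sub>R v l) = (\<lambda>l. (if l = i then v i else 0) - (if l = j then v j else 0))"
      unfolding x_def by (auto simp: fun_eq_iff scaleR_left_diff_distrib)
    have "(\<Sum>l<m. x l *\<^sub>R v l) = (\<Sum>l<m. (if l = i then v i else 0)) - (\<Sum>l<m. (if l = j then v j else 0))"
      unfolding xe by (simp add: sum_subtractf)
    also have "\<dots> = 0" using i j e by simp
    finally have "x i = 0" using gram_kernel[OF g] i by blast
    with ij show False by (simp add: x_def)
  qed
qed

lemma gram_indep:
  fixes v :: "nat \<Rightarrow> 'a::real_inner"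
  assumes g: "gram m v \<noteq> 0"
  shows "independent (v ` {..<m})"
proof
  assume "dependent (v ` {..<m})"
  then obtain u where u: "\<exists>w\<in>v ` {..<m}. u w \<noteq> 0" and s: "(\<Sum>w\<in>v ` {..<m}. u w *\<^sub>R w) = 0"
    using dependent_finite[of "v ` {..<m}"] by auto
  have "(\<Sum>i<m. u (v i) *\<^sub>R v i) = 0"
    using s by (simp add: sum.reindex[OF gram_inj[OF g]])
  then have "u (v i) = 0" if "i < m" for i
    using gram_kernel[OF g, of "\<lambda>i. u (v i)"] that by blast
  with u show False by auto
qed

lemma complement_frame:
  fixes v :: "nat \<Rightarrow> 'a::euclidean_space"
  assumes g: "gram m v \<noteq> 0" and m: "m \<le> DIM('a)"
  shows "\<exists>y. orthonormal_frame (DIM('a) - m) y \<and> (\<forall>j. DIM('a) - m \<le> j \<longrightarrow> y j = 0) \<and>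
             (\<forall>i<m. \<forall>j<DIM('a) - m. v i \<bullet> y j = 0)"
proof -
  let ?n = "DIM('a)"
  let ?S = "v ` {..<m}"
  let ?W = "{z. \<forall>x\<in>span ?S. real_inner_class.orthogonal x z}"
  have ind: "independent ?S" by (rule gram_indep[OF g])
  have cS: "card ?S = m" using gram_inj[OF g] by (simp add: card_image)
  have "dim ?W + dim (span ?S) = dim (UNIV :: 'a set)"
    using dim_subspace_orthogonal_to_vectors[of "span ?S" UNIV] by simp
  then have dW: "dim ?W = ?n - m"
    using ind cS by (simp add: dim_span dim_eq_card_independent)
  have sW: "subspace ?W" by (rule subspace_orthogonal_to_vectors)
  obtain B where BW: "B \<subseteq> ?W" and po: "pairwise real_inner_class.orthogonal B"
    and n1: "\<And>x. x \<in> B \<Longrightarrow> norm x = 1" and iB: "independent B" and cB: "card B = dim ?W"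
    by (rule orthonormal_basis_subspace[OF sW]) blast
  have fB: "finite B" using iB by (rule independent_imp_finite)
  obtain h where h: "bij_betw h {0..<card B} B" using ex_bij_betw_nat_finite[OF fB] by blast
  define y where "y = (\<lambda>j. if j < ?n - m then h j else 0)"
  have hB: "h j \<in> B" if "j < ?n - m" for j
    using h that cB dW by (auto simp: bij_betw_def)
  have on: "orthonormal_frame (?n - m) y"
    unfolding orthonormal_frame_def
  proof (intro allI impI)
    fix i j assume i: "i < ?n - m" and j: "j < ?n - m"
    show "y i \<bullet> y j = (if i = j then 1 else 0)"
    proof (cases "i = j")
      case True
      have "norm (h i) = 1" using n1 hB i by blast
      then have "h i \<bullet> h i = 1" by (simp add: norm_eq_1)
      then show ?thesis using True i by (simp add: y_def)
    next
      case False
      have "h i \<noteq> h j"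
        using h i j False cB dW unfolding bij_betw_def inj_on_def by auto
      then have "real_inner_class.orthogonal (h i) (h j)"
        using po hB i j by (auto simp: pairwise_def)
      then show ?thesis using False i j by (simp add: y_def real_inner_class.orthogonal_def)
    qed
  qed
  have z: "\<forall>j. ?n - m \<le> j \<longrightarrow> y j = 0" by (simp add: y_def)
  have "v i \<bullet> y j = 0" if i: "i < m" and j: "j < ?n - m" for i j
  proof -
    have "v i \<in> span ?S" using i by (intro span_base) auto
    moreover have "y j \<in> ?W" using BW hB j by (auto simp: y_def)
    ultimately show ?thesis by (auto simp: real_inner_class.orthogonal_def)
  qed
  then show ?thesis using on z by blast
qed

definition perp_spec :: "(nat \<Rightarrow> 'a::euclidean_space) \<Rightarrow> nat \<Rightarrow> (nat \<Rightarrow> 'a) \<Rightarrow> real \<Rightarrow> (nat \<Rightarrow> 'a) \<Rightarrow> bool" where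
  "perp_spec e m v s y \<longleftrightarrow> orthonormal_frame (DIM('a) - m) y \<and> (\<forall>j. DIM('a) - m \<le> j \<longrightarrow> y j = 0) \<and>
        (\<forall>i<m. \<forall>j<DIM('a) - m. v i \<bullet> y j = 0) \<and> \<bar>s\<bar> = mass m v \<and>
        s * orient e (tuple_append m v y) > 0"

lemma perp_ok:
  fixes e v :: "nat \<Rightarrow> 'a::euclidean_space"
  assumes e: "orthonormal_frame DIM('a) e" and m: "m \<le> DIM('a)" and g: "gram m v > 0"
    and p: "perp e m v = (s, y)"
  shows "perp_spec e m v s y"
proof -
  obtain y0 where y0: "orthonormal_frame (DIM('a) - m) y0" "\<forall>j. DIM('a) - m \<le> j \<longrightarrow> y0 j = 0"
    "\<forall>i<m. \<forall>j<DIM('a) - m. v i \<bullet> y0 j = 0"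
    using complement_frame[of m v] g m by auto
  let ?o = "orient e (tuple_append m v y0)"
  have o: "?o \<noteq> 0" using orient_nonzero[OF e m _ y0(1) y0(3)] g by simp
  have ms: "mass m v > 0" using g by (simp add: mass_def)
  define s0 where "s0 = (if ?o > 0 then mass m v else - mass m v)"
  have "perp_spec e m v s0 y0"
    unfolding perp_spec_def using y0 o ms
    by (auto simp: s0_def mult_pos_neg)
  then have ex: "\<exists>q. (\<lambda>(s, y). perp_spec e m v s y) q" by auto
  have "perp e m v = (SOME q. (\<lambda>(s, y). perp_spec e m v s y) q)"
    using g unfolding perp_def perp_spec_def by simp
  with someI_ex[OF ex] p show ?thesis by simp
qed


context
  fixes k :: nat and f :: "(nat \<Rightarrow> 'a::real_vector) \<Rightarrow> real"
  assumes f: "is_kcovector k f"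
begin

lemma fcong: "(\<And>i. i < k \<Longrightarrow> w i = w' i) \<Longrightarrow> f w = f w'"
  using f unfolding is_kcovector_def by blast

lemma flin: "i < k \<Longrightarrow> linear (\<lambda>x. f (w(i := x)))"
  using f unfolding is_kcovector_def by blast

lemma falt: "i < k \<Longrightarrow> j < k \<Longrightarrow> i \<noteq> j \<Longrightarrow> w i = w j \<Longrightarrow> f w = 0"
  using f unfolding is_kcovector_def by blast

lemma flin_sum:
  assumes i: "i < k"
  shows "f (w(i := (\<Sum>j\<in>J. c j *\<^sub>R z j))) = (\<Sum>j\<in>J. c j * f (w(i := z j)))"
proof -
  have L: "linear (\<lambda>x. f (w(i := x)))" by (rule flin[OF i])
  show ?thesis
    using linear_sum[OF L, of "\<lambda>j. c j *\<^sub>R z j" J] linear_scale[OF L] by simp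
qed

lemma fadd: "i < k \<Longrightarrow> f (w(i := x + y)) = f (w(i := x)) + f (w(i := y))"
  using linear_add[OF flin] by blast

lemma fswap:
  assumes a: "a < k" and b: "b < k" and ab: "a \<noteq> b"
  shows "f (y \<circ> Transposition.transpose a b) = - f y"
proof -
  define Q where "Q x1 x2 = f (y(a := x1, b := x2))" for x1 x2
  have Qb: "Q x1 (u + v) = Q x1 u + Q x1 v" for x1 u v
    unfolding Q_def using fadd[OF b, of "y(a := x1)"] by simp
  have Qa: "Q (u + v) x2 = Q u x2 + Q v x2" for x2 u v
  proof -
    have e: "y(a := t, b := x2) = (y(b := x2))(a := t)" for t
      using ab by (simp add: fun_upd_twist)
    show ?thesis unfolding Q_def e using fadd[OF a, of "y(b := x2)"] by simp
  qed
  have Q0: "Q s s = 0" for s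
    unfolding Q_def using ab by (intro falt[OF a b ab]) simp
  have "0 = Q (y a + y b) (y a + y b)" by (simp add: Q0)
  also have "\<dots> = Q (y a) (y a) + Q (y a) (y b) + Q (y b) (y a) + Q (y b) (y b)"
    by (simp add: Qa Qb)
  also have "\<dots> = Q (y a) (y b) + Q (y b) (y a)" by (simp add: Q0)
  finally have s: "Q (y a) (y b) = - Q (y b) (y a)" by simp
  have "Q (y a) (y b) = f y" unfolding Q_def by simp
  moreover have "Q (y b) (y a) = f (y \<circ> Transposition.transpose a b)"
    unfolding Q_def by (rule arg_cong[where f=f]) (auto simp: fun_eq_iff Transposition.transpose_def)
  ultimately show ?thesis using s by simp
qed

lemma fperm:
  assumes p: "p permutes {..<k}"
  shows "f (y \<circ> p) = of_int (sign p) * f y"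
proof -
  have "\<forall>y. f (y \<circ> p) = of_int (sign p) * f y"
  proof (rule permutes_induct[OF p])
    show "finite {..<k}" by simp
    show "\<forall>y. f (y \<circ> id) = of_int (sign id) * f y" by (simp add: sign_id)
  next
    fix a b q
    assume a: "a \<in> {..<k}" and b: "b \<in> {..<k}" and ab: "a \<noteq> b"
      and IH: "\<forall>y. f (y \<circ> q) = of_int (sign q) * f y" and q: "q permutes {..<k}"
    have pq: "permutation q" using q permutation_permutes by blast
    have sg: "sign (Transposition.transpose a b \<circ> q) = - sign q"
      using sign_compose[OF permutation_swap_id pq] ab by (simp add: sign_swap_id)
    show "\<forall>y. f (y \<circ> (Transposition.transpose a b \<circ> q)) = of_int (sign (Transposition.transpose a b \<circ> q)) * f y"
    proof
      fix y
      have "f (y \<circ> (Transposition.transpose a b \<circ> q)) = f ((y \<circ> Transposition.transpose a b) \<circ> q)"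
        by (simp add: comp_assoc)
      also have "\<dots> = of_int (sign q) * f (y \<circ> Transposition.transpose a b)" using IH by blast
      also have "\<dots> = - of_int (sign q) * f y" using fswap a b ab by simp
      finally show "f (y \<circ> (Transposition.transpose a b \<circ> q)) = of_int (sign (Transposition.transpose a b \<circ> q)) * f y"
        using sg by simp
    qed
  qed
  then show ?thesis by blast
qed

lemma fexpand:
  assumes "l \<le> k"
  shows "f (\<lambda>i. if i < l then (\<Sum>j<k. A i j *\<^sub>R y j) else z i) =
    (\<Sum>g\<in>{..<l} \<rightarrow>\<^sub>E {..<k}. (\<Prod>i<l. A i (g i)) * f (\<lambda>i. if i < l then y (g i) else z i))"
  using assms
proof (induction l arbitrary: z)
  case 0
  then show ?case by simp
next
  case (Suc l)
  then have l: "l < k" and lk: "l \<le> k" by auto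
  let ?S = "\<lambda>i. (\<Sum>j<k. A i j *\<^sub>R y j)"
  define z' where "z' = z(l := ?S l)"
  let ?W = "\<lambda>g. (\<lambda>i. if i < l then y (g i) else z i)"
  have e1: "(\<lambda>i. if i < Suc l then ?S i else z i) = (\<lambda>i. if i < l then ?S i else z' i)"
    by (auto simp: fun_eq_iff z'_def)
  have e2: "(\<lambda>i. if i < l then y (g i) else z' i) = (?W g)(l := ?S l)" for g
    by (auto simp: fun_eq_iff z'_def)
  have "f (\<lambda>i. if i < Suc l then ?S i else z i)
      = (\<Sum>g\<in>{..<l} \<rightarrow>\<^sub>E {..<k}. (\<Prod>i<l. A i (g i)) * f ((?W g)(l := ?S l)))"
    unfolding e1 Suc.IH[OF lk, of z'] e2 ..
  also have "\<dots> = (\<Sum>g\<in>{..<l} \<rightarrow>\<^sub>E {..<k}. \<Sum>j<k. (\<Prod>i<l. A i (g i)) * A l j * f ((?W g)(l := y j)))"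
    by (simp add: flin_sum[OF l] sum_distrib_left mult.assoc)
  also have "\<dots> = (\<Sum>j<k. \<Sum>g\<in>{..<l} \<rightarrow>\<^sub>E {..<k}. (\<Prod>i<l. A i (g i)) * A l j * f ((?W g)(l := y j)))"
    by (rule sum.swap)
  also have "\<dots> = (\<Sum>(j, g)\<in>{..<k} \<times> ({..<l} \<rightarrow>\<^sub>E {..<k}). (\<Prod>i<l. A i (g i)) * A l j * f ((?W g)(l := y j)))"
    by (rule sum.cartesian_product)
  also have "\<dots> = (\<Sum>(j, g)\<in>{..<k} \<times> ({..<l} \<rightarrow>\<^sub>E {..<k}).
       (\<lambda>g'. (\<Prod>i<Suc l. A i (g' i)) * f (\<lambda>i. if i < Suc l then y (g' i) else z i)) (g(l := j)))"
  proof (rule sum.cong[OF refl], clarify)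
    fix j g assume g: "g \<in> {..<l} \<rightarrow>\<^sub>E {..<k}"
    have pe: "(\<Prod>i<l. A i ((g(l := j)) i)) = (\<Prod>i<l. A i (g i))"
      by (rule prod.cong) auto
    have "(\<Prod>i<Suc l. A i ((g(l := j)) i)) = (\<Prod>i<l. A i (g i)) * A l j"
      by (simp only: prod.lessThan_Suc pe) simp
    moreover have "(\<lambda>i. if i < Suc l then y ((g(l := j)) i) else z i) = (?W g)(l := y j)"
      by (auto simp: fun_eq_iff)
    ultimately show "(\<Prod>i<l. A i (g i)) * A l j * f ((?W g)(l := y j)) =
       (\<Prod>i<Suc l. A i ((g(l := j)) i)) * f (\<lambda>i. if i < Suc l then y ((g(l := j)) i) else z i)"
      by simp
  qed
  also have "\<dots> = (\<Sum>g'\<in>{..<Suc l} \<rightarrow>\<^sub>E {..<k}. (\<Prod>i<Suc l. A i (g' i)) * f (\<lambda>i. if i < Suc l then y (g' i) else z i))"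
  proof -
    have "{..<Suc l} \<rightarrow>\<^sub>E {..<k} = (\<lambda>(y, g). g(l := y)) ` ({..<k} \<times> ({..<l} \<rightarrow>\<^sub>E {..<k}))"
      unfolding lessThan_Suc by (rule PiE_insert_eq)
    moreover have "inj_on (\<lambda>(y, g). g(l := y)) ({..<k} \<times> ({..<l} \<rightarrow>\<^sub>E {..<k}))"
      by (rule inj_combinator) simp
    ultimately show ?thesis
      by (simp add: sum.reindex case_prod_unfold)
  qed
  finally show ?case .
qed

lemma fdet:
  assumes w: "\<forall>i<k. w i = (\<Sum>j<k. A i j *\<^sub>R y j)"
  shows "f w = natdet k A * f y"
proof -
  let ?F = "\<lambda>g. (\<Prod>i<k. A i (g i)) * f (\<lambda>i. if i < k then y (g i) else 0)"
  let ?P = "{p. p permutes {..<k}}"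
  let ?r = "\<lambda>p. restrict p {..<k}"
  have "f w = f (\<lambda>i. if i < k then (\<Sum>j<k. A i j *\<^sub>R y j) else 0)"
    by (rule fcong) (simp add: w)
  also have "\<dots> = sum ?F ({..<k} \<rightarrow>\<^sub>E {..<k})"
    by (rule fexpand) simp
  also have "\<dots> = sum ?F (?r ` ?P)"
  proof (rule sum.mono_neutral_right)
    show "?r ` ?P \<subseteq> {..<k} \<rightarrow>\<^sub>E {..<k}"
    proof clarify
      fix p assume p: "p permutes {..<k}"
      show "?r p \<in> {..<k} \<rightarrow>\<^sub>E {..<k}"
        using p permutes_in_image[OF p] by (simp add: restrict_PiE_iff Pi_def)
    qed
    show "\<forall>g\<in>({..<k} \<rightarrow>\<^sub>E {..<k}) - ?r ` ?P. ?F g = 0"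
    proof
      fix g assume g: "g \<in> ({..<k} \<rightarrow>\<^sub>E {..<k}) - ?r ` ?P"
      have "\<not> inj_on g {..<k}"
      proof
        assume inj: "inj_on g {..<k}"
        define p where "p = (\<lambda>i. if i < k then g i else i)"
        have ip: "inj_on p {..<k}" using inj unfolding p_def inj_on_def by auto
        have im: "p ` {..<k} \<subseteq> {..<k}" using g unfolding p_def by auto
        have "p ` {..<k} = {..<k}" by (rule endo_inj_surj) (use ip im in auto)
        then have "bij_betw p {..<k} {..<k}" using ip by (simp add: bij_betw_def)
        then have "p permutes {..<k}" by (rule bij_imp_permutes) (simp add: p_def)
        moreover have "?r p = g" using g by (auto simp: p_def fun_eq_iff PiE_def extensional_def)
        ultimately show False using g by blast
      qed
      then obtain i j where ij: "i < k" "j < k" "i \<noteq> j" "g i = g j"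
        unfolding inj_on_def by auto
      have "f (\<lambda>i. if i < k then y (g i) else 0) = 0"
        by (rule falt[OF ij(1,2,3)]) (use ij in simp)
      then show "?F g = 0" by simp
    qed
  qed (simp add: finite_PiE)
  also have "\<dots> = sum (?F \<circ> ?r) ?P"
  proof (rule sum.reindex)
    show "inj_on ?r ?P"
    proof (rule inj_onI)
      fix p q assume p: "p \<in> ?P" and q: "q \<in> ?P" and e: "?r p = ?r q"
      show "p = q"
      proof
        fix x show "p x = q x"
        proof (cases "x < k")
          case True then show ?thesis using fun_cong[OF e, of x] by simp
        next
          case False then show ?thesis using p q by (simp add: permutes_not_in)
        qed
      qed
    qed
  qed
  also have "\<dots> = (\<Sum>p\<in>?P. of_int (sign p) * (\<Prod>i<k. A i (p i)) * f y)"
  proof (rule sum.cong[OF refl])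
    fix p assume p: "p \<in> ?P"
    have "(\<Prod>i<k. A i (?r p i)) = (\<Prod>i<k. A i (p i))" by simp
    moreover have "f (\<lambda>i. if i < k then y (?r p i) else 0) = f (y \<circ> p)"
      by (rule fcong) simp
    moreover have "f (y \<circ> p) = of_int (sign p) * f y" using fperm p by simp
    ultimately show "(?F \<circ> ?r) p = of_int (sign p) * (\<Prod>i<k. A i (p i)) * f y" by simp
  qed
  also have "\<dots> = natdet k A * f y"
    by (simp add: natdet_def sum_distrib_right)
  finally show ?thesis .
qed

end


lemma mass_pos: "\<bar>c\<bar> * mass m w = 1 \<Longrightarrow> gram m w > 0"
proof -
  assume h: "\<bar>c\<bar> * mass m w = 1"
  have "mass m w > 0"
  proof (rule ccontr)
    assume "\<not> mass m w > 0"
    then have "\<bar>c\<bar> * mass m w \<le> 0" by (simp add: mult_nonneg_nonpos)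
    with h show False by simp
  qed
  then show ?thesis by (simp add: mass_def)
qed

lemma diff_eval_scale:
  assumes "\<forall>q. H q v = s * G q y"
  shows "diff_eval H j u p c v = diff_eval G j u p (c * s) y"
  unfolding diff_eval_def using assms
  by (simp add: sum_distrib_left mult.assoc mult.left_commute)

context
  fixes e :: "nat \<Rightarrow> 'a::euclidean_space" and \<omega> :: "'a \<Rightarrow> (nat \<Rightarrow> 'a) \<Rightarrow> real" and k :: nat
  assumes e: "orthonormal_frame DIM('a) e" and kn: "k \<le> DIM('a)" and om: "is_kform k \<omega>"
begin

lemma KA:
  assumes g: "gram (DIM('a) - k) v > 0"
  shows "\<exists>s y. mass k y = 1 \<and> \<bar>s\<bar> = mass (DIM('a) - k) v \<and> (\<forall>q. hodge e k \<omega> q v = s * \<omega> q y)"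
proof -
  let ?m = "DIM('a) - k"
  obtain s y where p: "perp e ?m v = (s, y)" by (cases "perp e ?m v") auto
  have sp: "perp_spec e ?m v s y" by (rule perp_ok[OF e _ g p]) simp
  have "DIM('a) - ?m = k" using kn by simp
  then have "orthonormal_frame k y" using sp by (simp add: perp_spec_def)
  then have "mass k y = 1" by (simp add: mass_def gram_on)
  moreover have "\<bar>s\<bar> = mass ?m v" using sp by (simp add: perp_spec_def)
  moreover have "\<forall>q. hodge e k \<omega> q v = s * \<omega> q y" by (simp add: hodge_def p)
  ultimately show ?thesis by blast
qed

lemma KB:
  assumes g: "gram k w > 0"
  shows "\<exists>v d. mass (DIM('a) - k) v = 1 \<and> \<bar>d\<bar> = mass k w \<and> (\<forall>q. \<omega> q w = d * hodge e k \<omega> q v)"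
proof -
  let ?n = "DIM('a)"
  let ?m = "DIM('a) - k"
  obtain v where v: "orthonormal_frame ?m v" "\<forall>j. ?m \<le> j \<longrightarrow> v j = 0" "\<forall>i<k. \<forall>j<?m. w i \<bullet> v j = 0"
    using complement_frame[of k w] g kn by auto
  have gv: "gram ?m v = 1" by (rule gram_on[OF v(1)])
  obtain s y where p: "perp e ?m v = (s, y)" by (cases "perp e ?m v") auto
  have sp: "perp_spec e ?m v s y" by (rule perp_ok[OF e _ _ p]) (use gv in simp_all)
  have nm: "?n - ?m = k" using kn by simp
  have y: "orthonormal_frame k y" and vy: "\<forall>i<?m. \<forall>j<k. v i \<bullet> y j = 0"
    and s1: "\<bar>s\<bar> = 1"
    using sp gv by (simp_all add: perp_spec_def nm mass_def)
  let ?u = "tuple_append ?m v y"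
  have u: "orthonormal_frame ?n ?u"
    unfolding orthonormal_frame_def
  proof (intro allI impI)
    fix i j assume i: "i < ?n" and j: "j < ?n"
    show "?u i \<bullet> ?u j = (if i = j then 1 else 0)"
    proof (cases "i < ?m")
      case True
      show ?thesis
      proof (cases "j < ?m")
        case True
        then show ?thesis using \<open>i < ?m\<close> v(1) by (simp add: tuple_append_def orthonormal_frame_def)
      next
        case False
        then show ?thesis using \<open>i < ?m\<close> vy j kn by (auto simp: tuple_append_def)
      qed
    next
      case False
      show ?thesis
      proof (cases "j < ?m")
        case True
        then show ?thesis using \<open>\<not> i < ?m\<close> vy i kn by (auto simp: tuple_append_def inner_commute)
      next
        case False
        then have "i - ?m < k" "j - ?m < k" using \<open>\<not> i < ?m\<close> i j kn by auto
        then show ?thesis using \<open>\<not> i < ?m\<close> False y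
          by (auto simp: tuple_append_def orthonormal_frame_def)
      qed
    qed
  qed
  define A where "A = (\<lambda>i j. w i \<bullet> y j)"
  have wA: "\<forall>i<k. w i = (\<Sum>j<k. A i j *\<^sub>R y j)"
  proof (intro allI impI)
    fix i assume i: "i < k"
    define z where "z = w i - (\<Sum>j<k. A i j *\<^sub>R y j)"
    have "\<forall>l<?n. z \<bullet> ?u l = 0"
    proof (intro allI impI)
      fix l assume l: "l < ?n"
      show "z \<bullet> ?u l = 0"
      proof (cases "l < ?m")
        case True
        have "w i \<bullet> v l = 0" using v(3) i True by blast
        moreover have "(\<Sum>j<k. A i j *\<^sub>R y j) \<bullet> v l = 0"
          using vy True by (simp add: inner_sum_left inner_commute[of "y _" "v l"])
        ultimately show ?thesis using True by (simp add: z_def tuple_append_def inner_diff_left)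
      next
        case False
        then have t: "l - ?m < k" using l kn by auto
        have "(\<Sum>j<k. A i j *\<^sub>R y j) \<bullet> y (l - ?m) = (\<Sum>j<k. A i j * (y j \<bullet> y (l - ?m)))"
          by (simp add: inner_sum_left)
        also have "\<dots> = (\<Sum>j<k. if j = l - ?m then A i j else 0)"
          using y t by (intro sum.cong refl) (auto simp: orthonormal_frame_def)
        also have "\<dots> = A i (l - ?m)" using t by simp
        finally show ?thesis using False by (simp add: z_def tuple_append_def inner_diff_left A_def)
      qed
    qed
    then have "z = 0" by (rule on_frame_span[OF u])
    then show "w i = (\<Sum>j<k. A i j *\<^sub>R y j)" by (simp add: z_def)
  qed
  have gw: "gram k w = (natdet k A)^2" by (rule gram_coords[OF y wA])
  have mw: "mass k w = \<bar>natdet k A\<bar>" by (simp add: mass_def gw)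
  have kc: "is_kcovector k (\<omega> q)" for q using om by (simp add: is_kform_def)
  have "\<omega> q w = natdet k A * s * hodge e k \<omega> q v" for q
  proof -
    have "\<omega> q w = natdet k A * \<omega> q y" by (rule fdet[OF kc wA])
    moreover have "s * s = 1" using s1 by (metis abs_mult_self_eq mult_1_right)
    moreover have "hodge e k \<omega> q v = s * \<omega> q y" by (simp add: hodge_def p)
    ultimately show ?thesis by (metis mult.assoc mult_1_left)
  qed
  moreover have "\<bar>natdet k A * s\<bar> = mass k w" using s1 mw by (simp add: abs_mult)
  moreover have "mass ?m v = 1" using gv by (simp add: mass_def)
  ultimately show ?thesis by blast
qed

lemma norm0_eq: "form_norm0 (DIM('a) - k) (hodge e k \<omega>) = form_norm0 k \<omega>"
  unfolding form_norm0_def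
proof (rule SUP_eq)
  fix x :: "'a \<times> real \<times> (nat \<Rightarrow> 'a)" assume "x \<in> {(p, c, w). \<bar>c\<bar> * mass (DIM('a) - k) w = 1}"
  then obtain p c v where x: "x = (p, c, v)" and h: "\<bar>c\<bar> * mass (DIM('a) - k) v = 1" by auto
  obtain s y where sy: "mass k y = 1" "\<bar>s\<bar> = mass (DIM('a) - k) v" "\<forall>q. hodge e k \<omega> q v = s * \<omega> q y"
    using KA[OF mass_pos[OF h]] by blast
  have "(p, c * s, y) \<in> {(p, c, w). \<bar>c\<bar> * mass k w = 1}" using h sy by (simp add: abs_mult)
  moreover have "\<bar>c * hodge e k \<omega> p v\<bar> = \<bar>(c * s) * \<omega> p y\<bar>" using sy by (simp add: mult.assoc)
  ultimately show "\<exists>j\<in>{(p, c, w). \<bar>c\<bar> * mass k w = 1}.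
     (case x of (p, c, w) \<Rightarrow> ereal \<bar>c * hodge e k \<omega> p w\<bar>) \<le> (case j of (p, c, w) \<Rightarrow> ereal \<bar>c * \<omega> p w\<bar>)"
    using x by force
next
  fix x :: "'a \<times> real \<times> (nat \<Rightarrow> 'a)" assume "x \<in> {(p, c, w). \<bar>c\<bar> * mass k w = 1}"
  then obtain p c w where x: "x = (p, c, w)" and h: "\<bar>c\<bar> * mass k w = 1" by auto
  obtain v d where vd: "mass (DIM('a) - k) v = 1" "\<bar>d\<bar> = mass k w" "\<forall>q. \<omega> q w = d * hodge e k \<omega> q v"
    using KB[OF mass_pos[OF h]] by blast
  have "(p, c * d, v) \<in> {(p, c, w). \<bar>c\<bar> * mass (DIM('a) - k) w = 1}" using h vd by (simp add: abs_mult)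
  moreover have "\<bar>c * \<omega> p w\<bar> = \<bar>(c * d) * hodge e k \<omega> p v\<bar>" using vd by (simp add: mult.assoc)
  ultimately show "\<exists>j\<in>{(p, c, w). \<bar>c\<bar> * mass (DIM('a) - k) w = 1}.
     (case x of (p, c, w) \<Rightarrow> ereal \<bar>c * \<omega> p w\<bar>) \<le> (case j of (p, c, w) \<Rightarrow> ereal \<bar>c * hodge e k \<omega> p w\<bar>)"
    using x by force
qed

lemma normj_eq: "form_normj (DIM('a) - k) j (hodge e k \<omega>) = form_normj k j \<omega>"
  unfolding form_normj_def
proof (rule SUP_eq)
  fix x :: "'a \<times> real \<times> (nat \<Rightarrow> 'a) \<times> (nat \<Rightarrow> 'a)" assume "x \<in> {(p, c, w, u). (\<Prod>i<j. norm (u i)) * (\<bar>c\<bar> * mass (DIM('a) - k) w) = 1}"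
  then obtain p c v u where x: "x = (p, c, v, u)" and h: "(\<Prod>i<j. norm (u i)) * (\<bar>c\<bar> * mass (DIM('a) - k) v) = 1" by auto
  let ?P = "(\<Prod>i<j. norm (u i))"
  have h': "\<bar>?P * c\<bar> * mass (DIM('a) - k) v = 1" using h by (simp add: abs_mult prod_nonneg mult.assoc)
  obtain s y where sy: "mass k y = 1" "\<bar>s\<bar> = mass (DIM('a) - k) v" "\<forall>q. hodge e k \<omega> q v = s * \<omega> q y"
    using KA[OF mass_pos[OF h']] by blast
  have "(p, c * s, y, u) \<in> {(p, c, w, u). (\<Prod>i<j. norm (u i)) * (\<bar>c\<bar> * mass k w) = 1}"
    using h sy by (simp add: abs_mult)
  moreover have "diff_eval (hodge e k \<omega>) j u p c v = diff_eval \<omega> j u p (c * s) y"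
    by (rule diff_eval_scale) (use sy in blast)
  ultimately show "\<exists>i\<in>{(p, c, w, u). (\<Prod>i<j. norm (u i)) * (\<bar>c\<bar> * mass k w) = 1}.
     (case x of (p, c, w, u) \<Rightarrow> ereal \<bar>diff_eval (hodge e k \<omega>) j u p c w\<bar>) \<le> (case i of (p, c, w, u) \<Rightarrow> ereal \<bar>diff_eval \<omega> j u p c w\<bar>)"
    using x by force
next
  fix x :: "'a \<times> real \<times> (nat \<Rightarrow> 'a) \<times> (nat \<Rightarrow> 'a)" assume "x \<in> {(p, c, w, u). (\<Prod>i<j. norm (u i)) * (\<bar>c\<bar> * mass k w) = 1}"
  then obtain p c w u where x: "x = (p, c, w, u)" and h: "(\<Prod>i<j. norm (u i)) * (\<bar>c\<bar> * mass k w) = 1" by auto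
  let ?P = "(\<Prod>i<j. norm (u i))"
  have h': "\<bar>?P * c\<bar> * mass k w = 1" using h by (simp add: abs_mult prod_nonneg mult.assoc)
  obtain v d where vd: "mass (DIM('a) - k) v = 1" "\<bar>d\<bar> = mass k w" "\<forall>q. \<omega> q w = d * hodge e k \<omega> q v"
    using KB[OF mass_pos[OF h']] by blast
  have "(p, c * d, v, u) \<in> {(p, c, w, u). (\<Prod>i<j. norm (u i)) * (\<bar>c\<bar> * mass (DIM('a) - k) w) = 1}"
    using h vd by (simp add: abs_mult)
  moreover have "diff_eval \<omega> j u p c w = diff_eval (hodge e k \<omega>) j u p (c * d) v"
    by (rule diff_eval_scale) (use vd in blast)
  ultimately show "\<exists>i\<in>{(p, c, w, u). (\<Prod>i<j. norm (u i)) * (\<bar>c\<bar> * mass (DIM('a) - k) w) = 1}.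
     (case x of (p, c, w, u) \<Rightarrow> ereal \<bar>diff_eval \<omega> j u p c w\<bar>) \<le> (case i of (p, c, w, u) \<Rightarrow> ereal \<bar>diff_eval (hodge e k \<omega>) j u p c w\<bar>)"
    using x by force
qed

end

theorem mainTheorem7:
  fixes e :: "nat \<Rightarrow> 'a::euclidean_space" and \<omega> :: "'a \<Rightarrow> (nat \<Rightarrow> 'a) \<Rightarrow> real" and k r :: nat
  assumes "orthonormal_frame DIM('a) e"
    and "k \<le> DIM('a)"
    and "is_kform k \<omega>"
    and "nat_norm k r \<omega> < \<infinity>"
  shows "nat_norm (DIM('a) - k) r (hodge e k \<omega>) = nat_norm k r \<omega>"
  unfolding nat_norm_def
  using norm0_eq[OF assms(1-3)] normj_eq[OF assms(1-3)] by simp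

end
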